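(* Let $d\ge3$, let $G$ be a $d$-map and let $\mathcal{L}$ be a $d$-GS labeling of $G$. For every inner edge $e$ of $G$, if $c_1,c_2,c_3,c_4$ are the four corners incident to $e$ listed in counterclockwise order around $e$, then the sum of the label jumps from $c_1$ to $c_2$, $c_2$ to $c_3$, $c_3$ to $c_4$ and $c_4$ to $c_1$ equals $d$.
   Context: A plane map is a connected graph (loops, multiple edges allowed) embedded in the plane without crossings, up to deformation; outer (unbounded) face, inner faces; outer vertices/edges lie on the outer face. A corner is the sector between consecutive half-edges around a vertex, inner if in an inner face; $\deg(f)$ = number of corners of face $f$. For $d\ge3$, a $d$-map has inner faces of degree $\le d$ and outer face of degree $d$ bounded by a simple cycle, with outer vertices $v_1,\dots,v_d$ in clockwise order. The four corners incident to an edge $e=\{u,v\}$ are the corners at $u$ and at $v$ on each side of $e$; they are ordered by turning counterclockwise around a small neighborhood of $e$. Label jump from $i$ to $i'$ in $[d]$: the $\delta\in\{0,\dots,d-1\}$ with $i+\delta\equiv i'\pmod d$. A $d$-GS labeling labels each inner corner in $[d]$ with (L0) corners at $v_i$ labeled $i$; (L1) around every inner vertex and every inner face, the jumps between consecutive corners in clockwise order sum to $d$; (L2) consecutive corners around an inner face have distinct labels; (L3) for each inner edge $e$ and incident face $f$, with $c,c'$ the corners of $f$ at $e$ ($c'$ following $c$ clockwise around $f$), $v$ the vertex of $c'$, $\delta$ the jump $c\to c'$ and $\epsilon$ the jump from $c'$ to the next corner clockwise around $v$ (outer corner at $v_i$ considered labeled $i$): $\delta+\epsilon>d-\deg(f)$.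 *)

theory Defs
  imports "HOL-Combinatorics.Permutations"
begin

text \<open>
Plane maps are encoded as combinatorial maps (rotation systems) of genus 0.
A finite set H of darts (half-edges); alpha is the fixed-point-free involution
pairing the two darts of an edge; sigma is the permutation giving, for a dart h
at a vertex v, the next dart CLOCKWISE around v.  Vertices are sigma-orbits,
edges are alpha-orbits.

A corner is identified with a dart h: it is the sector at the vertex of h
between h and sigma h (clockwise from h).  The next corner clockwise around the
vertex is sigma h.  The next corner clockwise around the face containing h
is fnext h = (inv sigma) (alpha h); the edge separating these two corners
is the edge of h.
\<close>

definition orb :: "('a \<Rightarrow> 'a) \<Rightarrow> 'a \<Rightarrow> 'a set" where
  "orb f x = range (\<lambda>n. (f ^^ n) x)"

definition fnext :: "('a \<Rightarrow> 'a) \<Rightarrow> ('a \<Rightarrow> 'a) \<Rightarrow> 'a \<Rightarrow> 'a" where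
  "fnext \<sigma> \<alpha> = inv \<sigma> \<circ> \<alpha>"

definition jump :: "nat \<Rightarrow> nat \<Rightarrow> nat \<Rightarrow> nat" where
  "jump d i i' = nat ((int i' - int i) mod int d)"

definition plane_map :: "'a set \<Rightarrow> ('a \<Rightarrow> 'a) \<Rightarrow> ('a \<Rightarrow> 'a) \<Rightarrow> bool" where
  "plane_map H \<alpha> \<sigma> \<longleftrightarrow>
     finite H \<and> H \<noteq> {} \<and>
     \<alpha> permutes H \<and> (\<forall>h\<in>H. \<alpha> h \<noteq> h \<and> \<alpha> (\<alpha> h) = h) \<and>
     \<sigma> permutes H \<and>
     (\<forall>h\<in>H. \<forall>h'\<in>H. (h, h') \<in> {(x, y). x \<in> H \<and> (y = \<alpha> x \<or> y = \<sigma> x)}\<^sup>*) \<and>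
     int (card (orb \<sigma> ` H)) - int (card (orb \<alpha> ` H)) + int (card (orb (fnext \<sigma> \<alpha>) ` H)) = 2"

definition outer_face :: "('a \<Rightarrow> 'a) \<Rightarrow> ('a \<Rightarrow> 'a) \<Rightarrow> 'a \<Rightarrow> 'a set" where
  "outer_face \<alpha> \<sigma> r = orb (fnext \<sigma> \<alpha>) r"

text \<open>Going around the outer face with fnext (face on the right) is counterclockwise in the
plane, so clockwise order of outer vertices follows the inverse of fnext, which is alpha o sigma.
The outer vertex v_i (i = 1..d) is the vertex of the dart (alpha o sigma)^i r (so v_d is the
vertex of r).\<close>
definition outer_vertex :: "('a \<Rightarrow> 'a) \<Rightarrow> ('a \<Rightarrow> 'a) \<Rightarrow> 'a \<Rightarrow> nat \<Rightarrow> 'a set" where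
  "outer_vertex \<alpha> \<sigma> r i = orb \<sigma> (((\<alpha> \<circ> \<sigma>) ^^ i) r)"

definition d_map :: "nat \<Rightarrow> 'a set \<Rightarrow> ('a \<Rightarrow> 'a) \<Rightarrow> ('a \<Rightarrow> 'a) \<Rightarrow> 'a \<Rightarrow> bool" where
  "d_map d H \<alpha> \<sigma> r \<longleftrightarrow>
     plane_map H \<alpha> \<sigma> \<and> r \<in> H \<and>
     card (outer_face \<alpha> \<sigma> r) = d \<and>
     inj_on (orb \<sigma>) (outer_face \<alpha> \<sigma> r) \<and>
     (\<forall>h\<in>H. h \<notin> outer_face \<alpha> \<sigma> r \<longrightarrow> card (orb (fnext \<sigma> \<alpha>) h) \<le> d)"

definition inner_edge :: "('a \<Rightarrow> 'a) \<Rightarrow> ('a \<Rightarrow> 'a) \<Rightarrow> 'a \<Rightarrow> 'a \<Rightarrow> bool" where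
  "inner_edge \<alpha> \<sigma> r h \<longleftrightarrow> h \<notin> outer_face \<alpha> \<sigma> r \<and> \<alpha> h \<notin> outer_face \<alpha> \<sigma> r"

definition ext_label :: "nat \<Rightarrow> ('a \<Rightarrow> 'a) \<Rightarrow> ('a \<Rightarrow> 'a) \<Rightarrow> 'a \<Rightarrow> ('a \<Rightarrow> nat) \<Rightarrow> 'a \<Rightarrow> nat" where
  "ext_label d \<alpha> \<sigma> r lab h =
     (if h \<in> outer_face \<alpha> \<sigma> r
      then (THE i. i \<in> {1..d} \<and> orb \<sigma> h = outer_vertex \<alpha> \<sigma> r i)
      else lab h)"

definition d_GS_labeling :: "nat \<Rightarrow> 'a set \<Rightarrow> ('a \<Rightarrow> 'a) \<Rightarrow> ('a \<Rightarrow> 'a) \<Rightarrow> 'a \<Rightarrow> ('a \<Rightarrow> nat) \<Rightarrow> bool" where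
  "d_GS_labeling d H \<alpha> \<sigma> r lab \<longleftrightarrow>
     \<comment> \<open>labels of inner corners lie in [d]\<close>
     (\<forall>h\<in>H. h \<notin> outer_face \<alpha> \<sigma> r \<longrightarrow> lab h \<in> {1..d}) \<and>
     \<comment> \<open>(L0)\<close>
     (\<forall>i\<in>{1..d}. \<forall>h\<in>H. h \<notin> outer_face \<alpha> \<sigma> r \<longrightarrow> orb \<sigma> h = outer_vertex \<alpha> \<sigma> r i \<longrightarrow> lab h = i) \<and>
     \<comment> \<open>(L1) inner vertices\<close>
     (\<forall>h\<in>H. (\<forall>i\<in>{1..d}. orb \<sigma> h \<noteq> outer_vertex \<alpha> \<sigma> r i) \<longrightarrow>
        (\<Sum>x\<in>orb \<sigma> h. jump d (lab x) (lab (\<sigma> x))) = d) \<and>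
     \<comment> \<open>(L1) inner faces\<close>
     (\<forall>h\<in>H. h \<notin> outer_face \<alpha> \<sigma> r \<longrightarrow>
        (\<Sum>x\<in>orb (fnext \<sigma> \<alpha>) h. jump d (lab x) (lab (fnext \<sigma> \<alpha> x))) = d) \<and>
     \<comment> \<open>(L2)\<close>
     (\<forall>h\<in>H. h \<notin> outer_face \<alpha> \<sigma> r \<longrightarrow> lab h \<noteq> lab (fnext \<sigma> \<alpha> h)) \<and>
     \<comment> \<open>(L3): c = h, c' = fnext h, the next corner clockwise around the vertex of c' is sigma c'\<close>
     (\<forall>h\<in>H. inner_edge \<alpha> \<sigma> r h \<longrightarrow>
        int (jump d (lab h) (lab (fnext \<sigma> \<alpha> h)))
        + int (jump d (lab (fnext \<sigma> \<alpha> h)) (ext_label d \<alpha> \<sigma> r lab (\<sigma> (fnext \<sigma> \<alpha> h))))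
        > int d - int (card (orb (fnext \<sigma> \<alpha>) h)))"

end

theory Submission imports Defs "HOL-Combinatorics.Orbits" begin

lemma orb_orbit: "permutation p \<Longrightarrow> orb p x = orbit p x"
  by (auto simp add: orb_def orbit_altdef_permutation)

lemma orb_self: "x \<in> orb p x" unfolding orb_def by (metis funpow_0 rangeI)

lemma orb_funpow: "(p ^^ n) x \<in> orb p x" unfolding orb_def by simp

lemma orb_step: "y \<in> orb p x \<Longrightarrow> p y \<in> orb p x"
  unfolding orb_def by (auto, metis funpow.simps(2) comp_apply rangeI)

lemma orb_eq: "permutation p \<Longrightarrow> y \<in> orb p x \<Longrightarrow> orb p y = orb p x"
  by (simp add: orb_orbit cyclic_on_orbit' orbit_cyclic_eq3)

lemma funpow_permutes_in: "p permutes H \<Longrightarrow> x \<in> H \<Longrightarrow> (p^^n) x \<in> H"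
  by (induct n) (auto simp: permutes_in_image)

lemma orb_sub: "p permutes H \<Longrightarrow> x \<in> H \<Longrightarrow> orb p x \<subseteq> H"
  unfolding orb_def by (auto simp: funpow_permutes_in)

lemma sum_orbits:
  assumes "finite H" "p permutes H"
  shows "sum g H = (\<Sum>W\<in>orb p ` H. sum g W)"
proof -
  have pp: "permutation p" using permutes_imp_permutation[OF assms] .
  have sb: "orb p x \<subseteq> H" if "x \<in> H" for x using orb_sub[OF assms(2) that] .
  have U: "\<Union>(orb p ` H) = H"
  proof
    show "\<Union>(orb p ` H) \<subseteq> H" using sb by (rule UN_least)
    show "H \<subseteq> \<Union>(orb p ` H)"
    proof
      fix x assume "x \<in> H"
      then show "x \<in> \<Union>(orb p ` H)" using orb_self[of x p] by (rule UN_I)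
    qed
  qed
  have "sum g (\<Union>(orb p ` H)) = (sum \<circ> sum) g (orb p ` H)"
  proof (rule sum.Union_disjoint)
    show "\<forall>A\<in>orb p ` H. finite A"
    proof
      fix A assume "A \<in> orb p ` H"
      then obtain x where "x \<in> H" "A = orb p x" by auto
      then show "finite A" using sb assms(1) finite_subset by metis
    qed
    show "\<forall>A\<in>orb p ` H. \<forall>B\<in>orb p ` H. A \<noteq> B \<longrightarrow> A \<inter> B = {}"
    proof (intro ballI impI)
      fix A B assume "A \<in> orb p ` H" "B \<in> orb p ` H" "A \<noteq> B"
      then obtain x y where xy: "A = orb p x" "B = orb p y" by auto
      show "A \<inter> B = {}"
      proof (rule ccontr)
        assume "A \<inter> B \<noteq> {}"
        then obtain z where "z \<in> orb p x" "z \<in> orb p y" using xy by auto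
        then have "orb p x = orb p y" using orb_eq[OF pp] by metis
        then show False using xy \<open>A \<noteq> B\<close> by simp
      qed
    qed
  qed
  then show ?thesis using U by simp
qed

lemma jump_int: "d > 0 \<Longrightarrow> int (jump d a b) = (int b - int a) mod int d"
  by (simp add: jump_def)

lemma jump_lt: "d > 0 \<Longrightarrow> jump d a b < d"
  unfolding jump_def by (simp add: nat_less_iff)

lemma jump_same: "jump d a a = 0" by (simp add: jump_def)

lemma jump_pos: "d > 0 \<Longrightarrow> a \<in> {1..d} \<Longrightarrow> b \<in> {1..d} \<Longrightarrow> a \<noteq> b \<Longrightarrow> jump d a b \<ge> 1"
proof (rule ccontr)
  assume d: "d > 0" and ab: "a \<in> {1..d}" "b \<in> {1..d}" "a \<noteq> b" and "\<not> jump d a b \<ge> 1"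
  then have "(int b - int a) mod int d = 0" using jump_int[OF d, of a b] by simp
  then have "int d dvd (int b - int a)" by (simp add: mod_eq_0_iff_dvd)
  moreover have "\<bar>int b - int a\<bar> < int d" using ab by auto
  ultimately have "int b - int a = 0"
  proof (cases "int b - int a = 0")
    case False
    then have "\<bar>int d\<bar> \<le> \<bar>int b - int a\<bar>" using \<open>int d dvd _\<close> by (rule dvd_imp_le_int)
    then show ?thesis using \<open>\<bar>int b - int a\<bar> < int d\<close> by simp
  qed
  then show False using ab by simp
qed

lemma jump_cycle: "d > 0 \<Longrightarrow> d dvd (jump d a b + jump d b c + jump d c e + jump d e a)"
proof -
  assume d: "d > 0"
  have k: "int d dvd ((y::int) mod int d - y)" for y by (metis mod_eq_dvd_iff mod_mod_trivial)
  have "int (jump d a b + jump d b c + jump d c e + jump d e a)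
      = ((int b - int a) mod int d - (int b - int a)) + ((int c - int b) mod int d - (int c - int b))
        + ((int e - int c) mod int d - (int e - int c)) + ((int a - int e) mod int d - (int a - int e))"
    using d by (simp add: jump_int)
  also have "int d dvd \<dots>" by (intro dvd_add k)
  finally show ?thesis by (simp only: of_nat_dvd_iff)
qed

lemma orb_period:
  assumes pp: "permutation p" and c: "card (orb p r) = d"
  shows "orb p r = (\<lambda>n. (p^^n) r) ` {0..<d}" "inj_on (\<lambda>n. (p^^n) r) {0..<d}" "(p^^d) r = r"
proof -
  have rin: "r \<in> orbit p r" by (rule permutation_self_in_orbit[OF pp])
  define k where "k = funpow_dist1 p r r"
  have e: "orb p r = (\<lambda>n. (p^^n) r) ` {0..<k}"
    using orbit_conv_funpow_dist1[OF rin] orb_orbit[OF pp] k_def by simp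
  have i: "inj_on (\<lambda>n. (p^^n) r) {0..<k}" using inj_on_funpow_dist1[OF rin] k_def by simp
  have "card (orb p r) = k" using card_image[OF i] e by simp
  then have kd: "k = d" using c by simp
  show "orb p r = (\<lambda>n. (p^^n) r) ` {0..<d}" using e kd by simp
  show "inj_on (\<lambda>n. (p^^n) r) {0..<d}" using i kd by simp
  show "(p^^d) r = r" using funpow_dist1_prop[OF rin] k_def kd by simp
qed

lemma funpow_inv_cancel:
  fixes q f :: "'a \<Rightarrow> 'a" and i :: nat
  assumes "\<And>x. q (f x) = x"
  shows "(q^^i) ((f^^i) x) = x"
proof (induct i)
  case 0 then show ?case by (simp only: funpow_0)
next
  case (Suc i)
  have a: "(f^^Suc i) x = f ((f^^i) x)" by simp
  have b: "(q^^Suc i) y = (q^^i) (q y)" for y by (metis funpow_Suc_right comp_apply)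
  have "(q^^Suc i) ((f^^Suc i) x) = (q^^i) (q (f ((f^^i) x)))"
    by (simp only: a b)
  also have "\<dots> = x" using assms Suc by simp
  finally show ?case .
qed

lemma orb_fix: "p x = x \<Longrightarrow> orb p x = {x}"
proof -
  assume "p x = x"
  then have "(p^^n) x = x" for n by (induct n) auto
  then show ?thesis unfolding orb_def by auto
qed

lemma orb_invol: "\<alpha> (\<alpha> x) = x \<Longrightarrow> orb \<alpha> x = {x, \<alpha> x}"
proof -
  assume a: "\<alpha> (\<alpha> x) = x"
  have "(\<alpha>^^n) x \<in> {x, \<alpha> x}" for n by (induct n) (auto simp: a)
  moreover have "x \<in> orb \<alpha> x" "\<alpha> x \<in> orb \<alpha> x" using orb_self orb_step orb_self by metis+
  ultimately show ?thesis unfolding orb_def by auto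
qed

theorem mainTheorem11:
  fixes d :: nat and H :: "'a set" and \<alpha> \<sigma> :: "'a \<Rightarrow> 'a" and r :: 'a
    and lab :: "'a \<Rightarrow> nat" and h :: 'a
  assumes "d \<ge> 3"
    and "d_map d H \<alpha> \<sigma> r"
    and "d_GS_labeling d H \<alpha> \<sigma> r lab"
    and "h \<in> H"
    and "inner_edge \<alpha> \<sigma> r h"
  shows "jump d (lab h) (lab (fnext \<sigma> \<alpha> h))
       + jump d (lab (fnext \<sigma> \<alpha> h)) (lab (\<alpha> h))
       + jump d (lab (\<alpha> h)) (lab (inv \<sigma> h))
       + jump d (lab (inv \<sigma> h)) (lab h) = d"
proof -
  define fn where "fn = fnext \<sigma> \<alpha>"
  define OUT where "OUT = orb fn r"
  define L where "L = ext_label d \<alpha> \<sigma> r lab"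
  have d0: "d > 0" using assms(1) by simp
  have pm: "plane_map H \<alpha> \<sigma>" and rH: "r \<in> H" and cO: "card OUT = d"
    and injO: "inj_on (orb \<sigma>) OUT"
    using assms(2) unfolding d_map_def outer_face_def OUT_def fn_def by auto
  have fin: "finite H" and ap: "\<alpha> permutes H" and ainv: "\<forall>h\<in>H. \<alpha> h \<noteq> h \<and> \<alpha> (\<alpha> h) = h"
    and sp: "\<sigma> permutes H"
    and euler: "int (card (orb \<sigma> ` H)) - int (card (orb \<alpha> ` H)) + int (card (orb fn ` H)) = 2"
    using pm unfolding plane_map_def fn_def by auto
  have GS: "(\<forall>h\<in>H. h \<notin> OUT \<longrightarrow> lab h \<in> {1..d})"
     "(\<forall>i\<in>{1..d}. \<forall>h\<in>H. h \<notin> OUT \<longrightarrow> orb \<sigma> h = outer_vertex \<alpha> \<sigma> r i \<longrightarrow> lab h = i)"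
     "(\<forall>h\<in>H. (\<forall>i\<in>{1..d}. orb \<sigma> h \<noteq> outer_vertex \<alpha> \<sigma> r i) \<longrightarrow>
        (\<Sum>x\<in>orb \<sigma> h. jump d (lab x) (lab (\<sigma> x))) = d)"
     "(\<forall>h\<in>H. h \<notin> OUT \<longrightarrow> (\<Sum>x\<in>orb fn h. jump d (lab x) (lab (fn x))) = d)"
     "(\<forall>h\<in>H. h \<notin> OUT \<longrightarrow> lab h \<noteq> lab (fn h))"
    using assms(3) unfolding d_GS_labeling_def outer_face_def OUT_def fn_def by auto
  have hO: "h \<notin> OUT" "\<alpha> h \<notin> OUT" using assms(5) unfolding inner_edge_def outer_face_def OUT_def fn_def by auto
  have Lin: "\<And>x. x \<notin> OUT \<Longrightarrow> L x = lab x"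
    unfolding L_def ext_label_def outer_face_def OUT_def fn_def by simp
  have fnp: "fn permutes H" unfolding fn_def fnext_def
    using permutes_compose[OF ap permutes_inv[OF sp]] .
  have pfn: "permutation fn" using permutes_imp_permutation[OF fin fnp] .
  have psig: "permutation \<sigma>" using permutes_imp_permutation[OF fin sp] .
  have pal: "permutation \<alpha>" using permutes_imp_permutation[OF fin ap] .
  have aa: "\<alpha> (\<alpha> x) = x" for x
    using ainv ap by (cases "x \<in> H") (auto simp: permutes_not_in)
  have fn_ap: "fn x = inv \<sigma> (\<alpha> x)" for x unfolding fn_def fnext_def by simp
  have sfn: "\<sigma> (fn x) = \<alpha> x" for x unfolding fn_ap using permutes_inverses(1)[OF sp] by simp
  have qfn: "(\<alpha> \<circ> \<sigma>) (fn x) = x" for x using sfn aa by simp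
  have OH: "OUT \<subseteq> H" unfolding OUT_def using orb_sub[OF fnp rH] .
  note per = orb_period[OF pfn cO[unfolded OUT_def]]
  have ovi: "outer_vertex \<alpha> \<sigma> r i = orb \<sigma> ((fn^^(d-i)) r)" if "i \<le> d" for i
  proof -
    have "(fn^^(d-i)) r = ((\<alpha> \<circ> \<sigma>)^^i) ((fn^^i) ((fn^^(d-i)) r))"
      using funpow_inv_cancel[of "\<alpha> \<circ> \<sigma>" fn, OF qfn] by simp
    also have "(fn^^i) ((fn^^(d-i)) r) = (fn^^d) r"
    proof -
      have "(fn^^i) ((fn^^(d-i)) r) = (fn^^(i + (d-i))) r" by (simp add: funpow_add)
      then show ?thesis using that by simp
    qed
    also have "\<dots> = r" using per(3) .
    finally show ?thesis unfolding outer_vertex_def by (simp add: comp_def)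
  qed
  have Oint: "\<And>y. y \<in> OUT \<Longrightarrow> \<exists>m<d. y = (fn^^m) r" using per(1) unfolding OUT_def by auto
  have uniq: "\<exists>!i. i \<in> {1..d} \<and> orb \<sigma> y = outer_vertex \<alpha> \<sigma> r i" if yO: "y \<in> OUT" for y
  proof -
    obtain m where m: "m < d" "y = (fn^^m) r" using Oint[OF yO] by auto
    show ?thesis
    proof (rule ex1I[of _ "d - m"])
      show "d - m \<in> {1..d} \<and> orb \<sigma> y = outer_vertex \<alpha> \<sigma> r (d - m)"
        using m ovi[of "d-m"] by simp
    next
      fix j assume j: "j \<in> {1..d} \<and> orb \<sigma> y = outer_vertex \<alpha> \<sigma> r j"
      then have "orb \<sigma> y = orb \<sigma> ((fn^^(d-j)) r)" using ovi by simp
      moreover have "(fn^^(d-j)) r \<in> OUT" unfolding OUT_def by (rule orb_funpow)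
      ultimately have "y = (fn^^(d-j)) r" using injO yO by (meson inj_onD)
      then have "m = d - j" using per(2) m j by (auto dest: inj_onD)
      then show "j = d - m" using j by auto
    qed
  qed
  have Lout: "L y \<in> {1..d} \<and> orb \<sigma> y = outer_vertex \<alpha> \<sigma> r (L y)" if "y \<in> OUT" for y
  proof -
    have "L y = (THE i. i \<in> {1..d} \<and> orb \<sigma> y = outer_vertex \<alpha> \<sigma> r i)"
      using that unfolding L_def ext_label_def outer_face_def OUT_def fn_def by simp
    then show ?thesis using theI'[OF uniq[OF that]] by simp
  qed
  have Lout2: "L y = j" if "y \<in> OUT" "j \<in> {1..d}" "orb \<sigma> y = outer_vertex \<alpha> \<sigma> r j" for y j
    using uniq[OF that(1)] Lout[OF that(1)] that by blast
  have LH: "L x \<in> {1..d}" if "x \<in> H" for x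
    using that Lout Lin GS(1) by (cases "x \<in> OUT") auto
  have Ostab: "y \<in> OUT \<longleftrightarrow> x \<in> OUT" if "y \<in> orb fn x" for x y
  proof
    assume "y \<in> OUT"
    then have "orb fn y = OUT" unfolding OUT_def by (rule orb_eq[OF pfn])
    moreover have "orb fn y = orb fn x" using that by (rule orb_eq[OF pfn])
    ultimately show "x \<in> OUT" using orb_self by metis
  next
    assume "x \<in> OUT"
    then have "orb fn x = OUT" unfolding OUT_def by (rule orb_eq[OF pfn])
    then show "y \<in> OUT" using that by simp
  qed
  have fnO: "fn x \<in> OUT \<longleftrightarrow> x \<in> OUT" for x using Ostab[OF orb_step[OF orb_self]] .
  have F4: "jump d (L x) (L (fn x)) \<ge> 1" if "x \<in> H" for x
  proof (cases "x \<in> OUT")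
    case False
    then have "fn x \<notin> OUT" using fnO by simp
    then show ?thesis using False Lin GS(1,5) that permutes_in_image[OF fnp] jump_pos[OF d0] by auto
  next
    case True
    then have fxO: "fn x \<in> OUT" using fnO by simp
    have "L x \<noteq> L (fn x)"
    proof
      assume eq: "L x = L (fn x)"
      then have "orb \<sigma> x = orb \<sigma> (fn x)" using Lout[OF True] Lout[OF fxO] by simp
      then have "x = fn x" using injO True fxO by (meson inj_onD)
      then have "orb fn x = {x}" using orb_fix by metis
      moreover have "orb fn x = OUT" unfolding OUT_def using True[unfolded OUT_def] by (rule orb_eq[OF pfn])
      ultimately show False using cO assms(1) by simp
    qed
    then show ?thesis using LH that permutes_in_image[OF fnp] jump_pos[OF d0] by auto
  qed
  define Vs where "Vs = orb \<sigma> ` H"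
  define OV where "OV = outer_vertex \<alpha> \<sigma> r ` {1..d}"
  define vs where "vs W = (\<Sum>y\<in>W. jump d (L y) (L (\<sigma> y)))" for W
  have VS1: "vs (orb \<sigma> x) = 0" if xH: "x \<in> H" and xOV: "orb \<sigma> x \<in> OV" for x
  proof -
    obtain i where i: "i \<in> {1..d}" "orb \<sigma> x = outer_vertex \<alpha> \<sigma> r i" using xOV unfolding OV_def by auto
    have Ly: "L y = i" if "y \<in> orb \<sigma> x" for y
    proof -
      have yH: "y \<in> H" using orb_sub[OF sp \<open>x \<in> H\<close>] that by auto
      have "orb \<sigma> y = orb \<sigma> x" using orb_eq[OF psig that] .
      then show ?thesis using Lout2 Lin GS(2) i yH by (cases "y \<in> OUT") auto
    qed
    have "jump d (L y) (L (\<sigma> y)) = 0" if "y \<in> orb \<sigma> x" for y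
      using Ly[OF that] Ly[OF orb_step[OF that]] by (simp add: jump_same)
    then show ?thesis unfolding vs_def by (intro sum.neutral) blast
  qed
  have VS2: "vs (orb \<sigma> x) = d" if "x \<in> H" "orb \<sigma> x \<notin> OV" for x
  proof -
    have nO: "y \<notin> OUT" if "y \<in> orb \<sigma> x" for y
    proof
      assume "y \<in> OUT"
      moreover have "orb \<sigma> y = orb \<sigma> x" using orb_eq[OF psig that] .
      ultimately show False using Lout \<open>orb \<sigma> x \<notin> OV\<close> unfolding OV_def by force
    qed
    have "vs (orb \<sigma> x) = (\<Sum>y\<in>orb \<sigma> x. jump d (lab y) (lab (\<sigma> y)))"
      unfolding vs_def
    proof (rule sum.cong)
      fix y assume "y \<in> orb \<sigma> x"
      then show "jump d (L y) (L (\<sigma> y)) = jump d (lab y) (lab (\<sigma> y))"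
        using nO[of y] nO[OF orb_step] Lin by metis
    qed simp
    also have "\<dots> = d" using GS(3) that unfolding OV_def by auto
    finally show ?thesis .
  qed
  have OVsub: "OV \<subseteq> Vs"
  proof
    fix W assume "W \<in> OV"
    then obtain i where "i \<in> {1..d}" "W = orb \<sigma> ((fn^^(d-i)) r)" unfolding OV_def using ovi by auto
    moreover have "(fn^^(d-i)) r \<in> H" using funpow_permutes_in[OF fnp rH] .
    ultimately show "W \<in> Vs" unfolding Vs_def by auto
  qed
  have cOV: "card OV = d"
  proof -
    have "inj_on (outer_vertex \<alpha> \<sigma> r) {1..d}"
    proof (rule inj_onI)
      fix i j assume ij: "i \<in> {1..d}" "j \<in> {1..d}" "outer_vertex \<alpha> \<sigma> r i = outer_vertex \<alpha> \<sigma> r j"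
      have "(fn^^(d-i)) r \<in> OUT" "(fn^^(d-j)) r \<in> OUT" unfolding OUT_def by (rule orb_funpow)+
      moreover have "orb \<sigma> ((fn^^(d-i)) r) = orb \<sigma> ((fn^^(d-j)) r)" using ij ovi by simp
      ultimately have "(fn^^(d-i)) r = (fn^^(d-j)) r" using injO by (meson inj_onD)
      then have "d - i = d - j" using per(2) ij by (auto dest: inj_onD)
      then show "i = j" using ij by auto
    qed
    then show ?thesis unfolding OV_def by (simp add: card_image)
  qed
  have finVs: "finite Vs" unfolding Vs_def using fin by simp
  have Vsum: "(\<Sum>W\<in>Vs. vs W) = d * (card Vs - d)"
  proof -
    have "(\<Sum>W\<in>Vs. vs W) = (\<Sum>W\<in>Vs - OV. vs W) + (\<Sum>W\<in>OV. vs W)"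
      using sum.subset_diff[OF OVsub finVs] .
    also have "(\<Sum>W\<in>OV. vs W) = 0" using VS1 OVsub unfolding Vs_def by (auto intro!: sum.neutral)
    also have "(\<Sum>W\<in>Vs - OV. vs W) = (\<Sum>W\<in>Vs - OV. d)" using VS2 unfolding Vs_def by (intro sum.cong) auto
    also have "\<dots> = d * (card Vs - d)" using card_Diff_subset[OF finite_subset[OF OVsub finVs] OVsub] cOV by simp
    finally show ?thesis by simp
  qed
  have cVs: "card Vs \<ge> d" using card_mono[OF finVs OVsub] cOV by simp
  define Fs where "Fs = orb fn ` H"
  define fs where "fs W = (\<Sum>y\<in>W. jump d (L y) (L (fn y)))" for W
  have finFs: "finite Fs" unfolding Fs_def using fin by simp
  have OFs: "OUT \<in> Fs" unfolding Fs_def OUT_def using rH by simp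
  have FS1: "fs W = d" if WF: "W \<in> Fs - {OUT}" for W
  proof -
    obtain x where x: "x \<in> H" "W = orb fn x" using WF unfolding Fs_def by auto
    have xO: "x \<notin> OUT"
    proof
      assume "x \<in> OUT" then have "orb fn x = OUT" unfolding OUT_def by (rule orb_eq[OF pfn])
      then show False using WF x by simp
    qed
    have nO: "y \<notin> OUT" if "y \<in> orb fn x" for y using Ostab[OF that] xO by simp
    have "fs W = (\<Sum>y\<in>orb fn x. jump d (lab y) (lab (fn y)))"
      unfolding fs_def x(2)
    proof (rule sum.cong)
      fix y assume "y \<in> orb fn x"
      then show "jump d (L y) (L (fn y)) = jump d (lab y) (lab (fn y))"
        using nO[of y] nO[OF orb_step] Lin by metis
    qed simp
    also have "\<dots> = d" using GS(4) x xO by auto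
    finally show ?thesis .
  qed
  have FS2: "fs OUT \<le> d * (d - 1)"
  proof -
    have "fs OUT \<le> of_nat (card OUT) * (d - 1)" unfolding fs_def
    proof (rule sum_bounded_above)
      fix i
      have "jump d (L i) (L (fn i)) < d" by (rule jump_lt[OF d0])
      then show "jump d (L i) (L (fn i)) \<le> d - 1" by linarith
    qed
    then show ?thesis using cO by simp
  qed
  have Fsum: "(\<Sum>W\<in>Fs. fs W) \<le> d * (d - 1) + d * (card Fs - 1)"
  proof -
    have "(\<Sum>W\<in>Fs. fs W) = (\<Sum>W\<in>Fs - {OUT}. fs W) + fs OUT"
      using sum.subset_diff[of "{OUT}" Fs fs] OFs finFs by simp
    also have "(\<Sum>W\<in>Fs - {OUT}. fs W) = (\<Sum>W\<in>Fs - {OUT}. d)" using FS1 by (intro sum.cong) auto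
    also have "\<dots> = d * (card Fs - 1)" using OFs finFs by simp
    finally show ?thesis using FS2 by simp
  qed
  have cFs: "card Fs \<ge> 1" using OFs finFs by (metis One_nat_def Suc_leI card_gt_0_iff empty_iff)
  define g where "g x = jump d (L x) (L (fn x)) + jump d (L (fn x)) (L (\<sigma> (fn x)))" for x
  have "(\<Sum>x\<in>H. g x) = (\<Sum>x\<in>H. jump d (L x) (L (fn x))) + (\<Sum>x\<in>H. jump d (L (fn x)) (L (\<sigma> (fn x))))"
    unfolding g_def by (simp add: sum.distrib)
  also have "(\<Sum>x\<in>H. jump d (L (fn x)) (L (\<sigma> (fn x)))) = (\<Sum>x\<in>H. jump d (L x) (L (\<sigma> x)))"
    using sum.permute[OF fnp, of "\<lambda>x. jump d (L x) (L (\<sigma> x))"] by (simp add: comp_def)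
  also have "(\<Sum>x\<in>H. jump d (L x) (L (\<sigma> x))) = (\<Sum>W\<in>Vs. vs W)"
    unfolding Vs_def vs_def by (rule sum_orbits[OF fin sp])
  also have "(\<Sum>x\<in>H. jump d (L x) (L (fn x))) = (\<Sum>W\<in>Fs. fs W)"
    unfolding Fs_def fs_def by (rule sum_orbits[OF fin fnp])
  finally have gs0: "(\<Sum>x\<in>H. g x) = (\<Sum>W\<in>Fs. fs W) + (\<Sum>W\<in>Vs. vs W)" .
  have ar: "(d - 1) + (card Fs - 1) + (card Vs - d) = card Vs + card Fs - 2"
    using cVs cFs d0 by linarith
  have "d * (d - 1) + d * (card Fs - 1) + d * (card Vs - d) = d * ((d - 1) + (card Fs - 1) + (card Vs - d))"
    by (simp only: add_mult_distrib2)
  also have "\<dots> = d * (card Vs + card Fs - 2)" by (simp only: ar)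
  finally have gsum: "(\<Sum>x\<in>H. g x) \<le> d * (card Vs + card Fs - 2)"
    using gs0 Vsum Fsum ar by linarith
  define Es where "Es = orb \<alpha> ` H"
  have eul: "card Vs + card Fs - 2 = card Es"
    using euler unfolding Vs_def Fs_def Es_def by linarith
  define es where "es W = (\<Sum>y\<in>W. g y)" for W
  have gE: "(\<Sum>x\<in>H. g x) = (\<Sum>W\<in>Es. es W)" unfolding Es_def es_def by (rule sum_orbits[OF fin ap])
  have ES: "es (orb \<alpha> x) = g x + g (\<alpha> x)" "d \<le> g x + g (\<alpha> x)" if "x \<in> H" for x
  proof -
    have ne: "x \<noteq> \<alpha> x" using ainv that by metis
    show "es (orb \<alpha> x) = g x + g (\<alpha> x)" unfolding es_def orb_invol[of \<alpha> x, OF aa] using ne by simp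
    have "g x + g (\<alpha> x) = jump d (L x) (L (fn x)) + jump d (L (fn x)) (L (\<alpha> x))
        + jump d (L (\<alpha> x)) (L (fn (\<alpha> x))) + jump d (L (fn (\<alpha> x))) (L x)"
      unfolding g_def sfn aa by simp
    moreover have "1 \<le> g x + g (\<alpha> x)" using F4[OF that] unfolding g_def by simp
    ultimately show "d \<le> g x + g (\<alpha> x)" using jump_cycle[OF d0] by (metis dvd_imp_le le_less_trans less_one not_le)
  qed
  define W0 where "W0 = orb \<alpha> h"
  have finEs: "finite Es" unfolding Es_def using fin by simp
  have W0E: "W0 \<in> Es" unfolding W0_def Es_def using assms(4) by simp
  have "(\<Sum>W\<in>Es. es W) = es W0 + (\<Sum>W\<in>Es - {W0}. es W)"
    using sum.subset_diff[of "{W0}" Es es] W0E finEs by simp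
  moreover have "of_nat (card (Es - {W0})) * d \<le> (\<Sum>W\<in>Es - {W0}. es W)"
    by (rule sum_bounded_below) (use ES Es_def in auto)
  moreover have "card (Es - {W0}) = card Es - 1" using W0E finEs by simp
  moreover have "card Es \<ge> 1" using W0E finEs by (metis One_nat_def Suc_leI card_gt_0_iff empty_iff)
  ultimately have "es W0 + (card Es - 1) * d \<le> d * card Es" using gsum gE eul by simp
  moreover have "d * card Es = (card Es - 1) * d + d" using \<open>card Es \<ge> 1\<close>
    by (cases "card Es") auto
  ultimately have "es W0 \<le> d" by linarith
  moreover have "d \<le> es W0" using ES assms(4) unfolding W0_def by simp
  ultimately have e0: "es W0 = d" by simp
  have nO: "h \<notin> OUT" "fn h \<notin> OUT" "\<alpha> h \<notin> OUT" "fn (\<alpha> h) \<notin> OUT" using hO fnO by auto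
  have "es W0 = jump d (lab h) (lab (fn h)) + jump d (lab (fn h)) (lab (\<alpha> h))
        + jump d (lab (\<alpha> h)) (lab (inv \<sigma> h)) + jump d (lab (inv \<sigma> h)) (lab h)"
    using ES(1)[OF assms(4)] unfolding W0_def g_def sfn aa using nO Lin fn_ap[of "\<alpha> h"] aa by simp
  then show ?thesis using e0 unfolding fn_def by simp
qed

end
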